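(* Let $X=(X,d,\mathcal M,\mu)$ be a Borel metric measure space, $1\le p<\infty$, $Y$ a topological space and $g:Y\to\Sigma$ an injective continuous map, where $\Sigma=(-1,1)^{\mathbb N}$. Suppose that for every $E\in\mathcal M$ with $\mu(E)=0$, $X\setminus E$ is dense in $X$, and that $x_m,x_\infty\in X$ ($m\in\mathbb N$) are points such that $d(x_1,x_\infty)<1$, the sequence $r_m=d(x_m,x_\infty)$ is strictly decreasing and converges to $0$, and $\mu(B(x_\infty,r_1))\le 1$. Then for each continuous map $\delta:Y\to(0,1)$ there exists an injective continuous map $\Phi:Y\to L^p(X)$, where each $\Phi(y)$ is given by a specific function $X\to\mathbb R$ (also denoted $\Phi(y)$), such that for every $y\in Y$: (1) $\|\Phi(y)\|_p\le\delta(y)$; (2) if $2^{-k}\le\delta(y)\le2^{-k+1}$, $k\in\mathbb N$, then $\Phi(y)(x)=0$ for all $x\in X\setminus B(x_\infty,r_{2k})$; (3) if $2^{-k}\le\delta(y)\le2^{-k+1}$, $k\in\mathbb N$, then $\Phi(y)(x_m)=\delta(y)$ for all $m\in\{2j+1: j>k\}\cup\{\infty\}$; (4) $\Phi(y)$ is continuous on $X\setminus\{x_\infty\}$; (5) $y\in g^{-1}(c_1^\Sigma)$ if and only if $\Phi(y)\in C(X)$. Moreover, if $B(x_\infty,r_1)$ is contained in a compact subset of $X$, then each $\Phi(y)$ has compact support and (5) holds with $C(X)$ replaced by $C_u(X)$.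
   Context: A metric measure space $X=(X,d,\mathcal M,\mu)$ consists of a metric space $(X,d)$, a $\sigma$-algebra $\mathcal M$ and a measure $\mu$ on $\mathcal M$; it is Borel if $\mathcal M$ contains all Borel sets. $B(x,\lambda)=\{y:d(x,y)<\lambda\}$. $L^p(X)$ is the Banach space of $\mathcal M$-measurable $f:X\to\mathbb R$ with $\|f\|_p=(\int_X|f|^pd\mu)^{1/p}<\infty$, modulo a.e. equality. $C(X)$ (resp. $C_u(X)$) is the set of elements of $L^p(X)$ that agree a.e. with a continuous (resp. uniformly continuous) function $X\to\mathbb R$. $c_1^\Sigma=\{(x(n))\in(-1,1)^{\mathbb N}:\lim_n x(n)=1\}$. *)

theory Defs
  imports "HOL-Analysis.Analysis"
begin

definition in_Lp :: "'a measure \<Rightarrow> real \<Rightarrow> ('a \<Rightarrow> real) \<Rightarrow> bool" where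
  "in_Lp M p f \<longleftrightarrow> f \<in> borel_measurable M \<and> integrable M (\<lambda>x. \<bar>f x\<bar> powr p)"

definition Lp_norm :: "'a measure \<Rightarrow> real \<Rightarrow> ('a \<Rightarrow> real) \<Rightarrow> real" where
  "Lp_norm M p f = (\<integral>x. \<bar>f x\<bar> powr p \<partial>M) powr (1 / p)"

definition in_C :: "('a::metric_space) measure \<Rightarrow> ('a \<Rightarrow> real) \<Rightarrow> bool" where
  "in_C M f \<longleftrightarrow> (\<exists>h. continuous_on UNIV h \<and> (AE x in M. f x = h x))"

definition in_Cu :: "('a::metric_space) measure \<Rightarrow> ('a \<Rightarrow> real) \<Rightarrow> bool" where
  "in_Cu M f \<longleftrightarrow> (\<exists>h. uniformly_continuous_on UNIV h \<and> (AE x in M. f x = h x))"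

definition c1Sigma :: "(nat \<Rightarrow> real) set" where
  "c1Sigma = {x. (\<forall>n. x n \<in> {-1<..<1}) \<and> x \<longlonglongrightarrow> 1}"

end

theory Submission
  imports Defs
begin


definition tent :: "(nat \<Rightarrow> real) \<Rightarrow> nat \<Rightarrow> real \<Rightarrow> real" where
  "tent s n t = (case n of 0 \<Rightarrow> max 0 (min 1 ((t - s 1) / (s 0 - s 1)))
     | Suc m \<Rightarrow> max 0 (min ((t - s (Suc n)) / (s n - s (Suc n))) ((s m - t) / (s m - s n))))"

definition plin :: "(nat \<Rightarrow> real) \<Rightarrow> (nat \<Rightarrow> real) \<Rightarrow> real \<Rightarrow> real" where
  "plin s v t = (\<Sum>n < Suc (Suc (LEAST n. s n < t)). v n * tent s n t)"

lemma sum_lessThan_eq_zero_tail: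
  fixes f :: "nat \<Rightarrow> real"
  assumes "\<forall>n\<ge>A. f n = 0" "\<forall>n\<ge>B. f n = 0"
  shows "sum f {..<A} = sum f {..<B}"
proof -
  have "sum f {..<A} = sum f {..<max A B}"
    by (rule sum.mono_neutral_left) (use assms in auto)
  moreover have "sum f {..<B} = sum f {..<max A B}"
    by (rule sum.mono_neutral_left) (use assms in auto)
  ultimately show ?thesis by simp
qed

locale pl =
  fixes s :: "nat \<Rightarrow> real"
  assumes s_pos: "\<And>n. 0 < s n"
    and s_dec: "\<And>n. s (Suc n) < s n"
    and s_lim: "s \<longlonglongrightarrow> 0"
begin

lemma s_less: "m < n \<Longrightarrow> s n < s m"
proof -
  have "strict_mono (\<lambda>n. - s n)" unfolding strict_mono_Suc_iff using s_dec by simp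
  then show "m < n \<Longrightarrow> s n < s m" unfolding strict_mono_def by auto
qed

lemma s_le: "m \<le> n \<Longrightarrow> s n \<le> s m"
  using s_less by (cases "m = n") (auto intro: less_imp_le)

lemma s_ne[simp]: "s (Suc n) = s n \<longleftrightarrow> False" "s n = s (Suc n) \<longleftrightarrow> False"
  using s_dec[of n] by auto

lemma s_less_iff: "s n < s m \<longleftrightarrow> m < n"
  using s_less by (metis less_asym linorder_neqE_nat)

lemma s_le_iff: "s n \<le> s m \<longleftrightarrow> m \<le> n"
  using s_less_iff by (meson not_less)

lemma ex_below: "0 < t \<Longrightarrow> \<exists>n. s n < t"
proof -
  assume "0 < t"
  then have "eventually (\<lambda>n. s n < t) sequentially"
    using order_tendstoD(2)[OF s_lim] by blast
  then show ?thesis by (auto simp: eventually_sequentially)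
qed

lemma tent_ge0: "0 \<le> tent s n t"
  by (cases n) (auto simp: tent_def)

lemma tent_zero_Suc: "s m \<le> t \<Longrightarrow> tent s (Suc m) t = 0"
proof -
  assume "s m \<le> t"
  have "s (Suc m) < s m" by (rule s_dec)
  then have "(s m - t) / (s m - s (Suc m)) \<le> 0"
    using \<open>s m \<le> t\<close> by (intro divide_nonpos_pos) auto
  then show ?thesis by (simp add: tent_def)
qed

lemma tent_zero_above: "Suc (Suc k) \<le> n \<Longrightarrow> s (Suc k) \<le> t \<Longrightarrow> tent s n t = 0"
proof -
  assume a: "Suc (Suc k) \<le> n" "s (Suc k) \<le> t"
  then obtain m where m: "n = Suc m" "Suc k \<le> m" by (cases n) auto
  have "s m \<le> s (Suc k)" using m s_le by blast
  then show ?thesis using m a tent_zero_Suc by simp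
qed

lemma tent_zero_below: "Suc n \<le> k \<Longrightarrow> t \<le> s k \<Longrightarrow> tent s n t = 0"
proof -
  assume a: "Suc n \<le> k" "t \<le> s k"
  have "s k \<le> s (Suc n)" using a s_le by blast
  then have "(t - s (Suc n)) / (s n - s (Suc n)) \<le> 0"
    using a s_dec[of n] by (intro divide_nonpos_pos) auto
  then show ?thesis by (cases n) (auto simp: tent_def)
qed

lemma tent_k:
  assumes "s (Suc k) \<le> t" "t \<le> s k"
  shows "tent s k t = (t - s (Suc k)) / (s k - s (Suc k))"
proof -
  have d: "0 < s k - s (Suc k)" using s_dec[of k] by simp
  have l1: "(t - s (Suc k)) / (s k - s (Suc k)) \<le> 1" using d assms by simp
  have l0: "0 \<le> (t - s (Suc k)) / (s k - s (Suc k))" using d assms by simp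
  show ?thesis
  proof (cases k)
    case 0 then show ?thesis using l0 l1 by (simp add: tent_def)
  next
    case (Suc m)
    have d2: "0 < s m - s k" using s_dec[of m] Suc by simp
    have "1 \<le> (s m - t) / (s m - s k)" using d2 assms Suc s_dec[of m] by simp
    then show ?thesis using l0 l1 Suc by (simp add: tent_def)
  qed
qed

lemma tent_k1:
  assumes "s (Suc k) \<le> t" "t \<le> s k"
  shows "tent s (Suc k) t = (s k - t) / (s k - s (Suc k))"
proof -
  have d: "0 < s k - s (Suc k)" using s_dec[of k] by simp
  have d2: "0 < s (Suc k) - s (Suc (Suc k))" using s_dec[of "Suc k"] by simp
  have l1: "(s k - t) / (s k - s (Suc k)) \<le> 1" using d assms by simp
  have l0: "0 \<le> (s k - t) / (s k - s (Suc k))" using d assms by simp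
  have "1 \<le> (t - s (Suc (Suc k))) / (s (Suc k) - s (Suc (Suc k)))"
    using d2 assms by simp
  then show ?thesis using l0 l1 by (simp add: tent_def)
qed

lemma plin_eq:
  assumes "0 < t" "\<forall>n\<ge>N. tent s n t = 0"
  shows "plin s v t = (\<Sum>n<N. v n * tent s n t)"
proof -
  let ?L = "LEAST n. s n < t"
  have L: "s ?L < t" using ex_below[OF assms(1)] by (rule LeastI_ex)
  have "\<forall>n\<ge>Suc (Suc ?L). tent s n t = 0"
    using tent_zero_above[of "?L"] L s_dec[of ?L]
    by (metis Suc_le_D less_imp_le order.trans tent_zero_Suc s_le Suc_le_mono)
  then show ?thesis unfolding plin_def
    by (intro sum_lessThan_eq_zero_tail) (use assms in auto)
qed

lemma plin_interval:
  assumes "s (Suc k) \<le> t" "t \<le> s k"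
  shows "plin s v t = v k * ((t - s (Suc k)) / (s k - s (Suc k)))
                     + v (Suc k) * ((s k - t) / (s k - s (Suc k)))"
proof -
  have t0: "0 < t" using assms s_pos[of "Suc k"] by linarith
  have "plin s v t = (\<Sum>n<Suc (Suc k). v n * tent s n t)"
    by (rule plin_eq[OF t0]) (use tent_zero_above assms in auto)
  also have "\<dots> = (\<Sum>n<k. v n * tent s n t) + v k * tent s k t + v (Suc k) * tent s (Suc k) t"
    by simp
  also have "(\<Sum>n<k. v n * tent s n t) = 0"
    by (rule sum.neutral) (use tent_zero_below[OF _ assms(2)] in \<open>auto simp: Suc_le_eq\<close>)
  finally show ?thesis using tent_k[OF assms] tent_k1[OF assms] by simp
qed

lemma plin_node: "plin s v (s k) = v k"
  using plin_interval[of k "s k" v] s_dec[of k] by simp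

lemma plin_big: "s 0 \<le> t \<Longrightarrow> plin s v t = v 0"
proof -
  assume a: "s 0 \<le> t"
  have t0: "0 < t" using a s_pos[of 0] by linarith
  have "plin s v t = (\<Sum>n<Suc 0. v n * tent s n t)"
  proof (rule plin_eq[OF t0], intro allI impI)
    fix n :: nat assume "Suc 0 \<le> n"
    then obtain m where m: "n = Suc m" by (cases n) auto
    have "s m \<le> t" using s_le[of 0 m] a by linarith
    then show "tent s n t = 0" using m tent_zero_Suc by simp
  qed
  moreover have "tent s 0 t = 1"
  proof -
    have "0 < s 0 - s 1" using s_dec[of 0] by simp
    then have "1 \<le> (t - s 1) / (s 0 - s 1)" using a by simp
    then show ?thesis by (simp add: tent_def)
  qed
  ultimately show ?thesis by simp
qed

lemma convex_bound:
  fixes a b x y l :: real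
  assumes "a \<le> x" "x \<le> b" "a \<le> y" "y \<le> b" "0 \<le> l" "l \<le> 1"
  shows "a \<le> x * l + y * (1 - l) \<and> x * l + y * (1 - l) \<le> b"
proof -
  have "a = a * l + a * (1 - l)" "b = b * l + b * (1 - l)" by (simp_all add: algebra_simps)
  moreover have "a * l \<le> x * l" "x * l \<le> b * l" using assms by (auto intro: mult_right_mono)
  moreover have "a * (1 - l) \<le> y * (1 - l)" "y * (1 - l) \<le> b * (1 - l)"
    using assms by (auto intro: mult_right_mono)
  ultimately show ?thesis by linarith
qed

lemma plin_interval_bound:
  assumes "s (Suc k) \<le> t" "t \<le> s k" "a \<le> v k" "v k \<le> b" "a \<le> v (Suc k)" "v (Suc k) \<le> b"
  shows "a \<le> plin s v t \<and> plin s v t \<le> b"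
proof -
  define l where "l = (t - s (Suc k)) / (s k - s (Suc k))"
  have d: "0 < s k - s (Suc k)" using s_dec[of k] by simp
  have l1: "(s k - t) / (s k - s (Suc k)) = 1 - l"
    unfolding l_def using d by (simp add: field_simps)
  have "0 \<le> l" "l \<le> 1" unfolding l_def using d assms by auto
  then show ?thesis using plin_interval[OF assms(1,2), of v] l1 convex_bound[OF assms(3-6)]
    unfolding l_def[symmetric] by simp
qed

lemma locate:
  assumes "0 < t" "t < s 0"
  shows "s (Suc (LEAST k. s (Suc k) \<le> t)) \<le> t \<and> t \<le> s (LEAST k. s (Suc k) \<le> t)"
proof -
  let ?k = "LEAST k. s (Suc k) \<le> t"
  obtain n where n: "s n < t" using ex_below[OF assms(1)] by blast
  then have n': "s (Suc n) \<le> t" using s_dec[of n] by linarith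
  have A: "s (Suc ?k) \<le> t" using n' by (rule LeastI)
  have B: "t \<le> s ?k"
  proof (cases ?k)
    case 0 then show ?thesis using assms by simp
  next
    case (Suc j)
    then have "\<not> s (Suc j) \<le> t" using not_less_Least[of j "\<lambda>k. s (Suc k) \<le> t"] by simp
    then show ?thesis using Suc by simp
  qed
  show ?thesis using A B by simp
qed

lemma plin_bound_low:
  assumes "\<forall>m\<ge>N. a \<le> v m \<and> v m \<le> b" "0 < t" "t < s N"
  shows "a \<le> plin s v t \<and> plin s v t \<le> b"
proof -
  let ?k = "LEAST k. s (Suc k) \<le> t"
  have t0: "t < s 0" using assms s_le[of 0 N] by linarith
  note l = locate[OF assms(2) t0]
  have "s (Suc ?k) < s N" using l assms by linarith
  then have "N \<le> ?k" using s_less_iff by simp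
  then show ?thesis using l assms by (intro plin_interval_bound) auto
qed

lemma plin_bound_high:
  assumes "\<forall>m\<le>N. a \<le> v m \<and> v m \<le> b" "s N \<le> t"
  shows "a \<le> plin s v t \<and> plin s v t \<le> b"
proof (cases "s 0 \<le> t")
  case True then show ?thesis using plin_big assms by simp
next
  case False
  let ?k = "LEAST k. s (Suc k) \<le> t"
  have t0: "0 < t" using assms s_pos[of N] by linarith
  note l = locate[OF t0] False
  have N: "N \<noteq> 0" using False assms by (cases N) auto
  then obtain M where M: "N = Suc M" by (cases N) auto
  have "?k \<le> M" using assms M by (intro Least_le) simp
  then show ?thesis using l assms M by (intro plin_interval_bound[of ?k]) auto
qed

lemma plin_bound_all:
  assumes "\<forall>m. a \<le> v m \<and> v m \<le> b" "0 < t"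
  shows "a \<le> plin s v t \<and> plin s v t \<le> b"
proof (cases "s 0 \<le> t")
  case True then show ?thesis using plin_bound_high[of 0 a v b t] assms by simp
next
  case False then show ?thesis using plin_bound_low[of 0 a v b t] assms by simp
qed

lemma plin_bound_low1:
  assumes "\<forall>m\<ge>N. a \<le> v m" "0 < t" "t < s N"
  shows "a \<le> plin s v t"
proof -
  let ?k = "LEAST k. s (Suc k) \<le> t"
  have t0: "t < s 0" using assms s_le[of 0 N] by linarith
  note l = locate[OF assms(2) t0]
  have "s (Suc ?k) < s N" using l assms by linarith
  then have "N \<le> ?k" using s_less_iff by simp
  then have "a \<le> plin s v t \<and> plin s v t \<le> max (v ?k) (v (Suc ?k))"
    using l assms by (intro plin_interval_bound[of ?k]) auto
  then show ?thesis by simp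
qed

lemma plin_bound_high1:
  assumes "\<forall>m\<le>N. v m \<le> b" "s N \<le> t"
  shows "plin s v t \<le> b"
proof (cases "s 0 \<le> t")
  case True then show ?thesis using plin_big assms by simp
next
  case False
  let ?k = "LEAST k. s (Suc k) \<le> t"
  have t0: "0 < t" using assms s_pos[of N] by linarith
  note l = locate[OF t0] False
  have N: "N \<noteq> 0" using False assms by (cases N) auto
  then obtain M where M: "N = Suc M" by (cases N) auto
  have "?k \<le> M" using assms M by (intro Least_le) simp
  then have "min (v ?k) (v (Suc ?k)) \<le> plin s v t \<and> plin s v t \<le> b"
    using l assms M by (intro plin_interval_bound[of ?k]) auto
  then show ?thesis by simp
qed

lemma plin_diff: "plin s v t - plin s w t = plin s (\<lambda>n. v n - w n) t"
  unfolding plin_def by (simp add: sum_subtractf left_diff_distrib)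

lemma tent_cont: "continuous_on A (tent s n)"
  unfolding tent_def by (cases n) (auto intro!: continuous_intros)

lemma plin_cont: "continuous_on {0<..} (plin s v)"
proof -
  have U: "{0<..} = (\<Union>N. {s N<..})"
  proof
    show "{0<..} \<subseteq> (\<Union>N. {s N<..})" using ex_below by auto
    show "(\<Union>N. {s N<..}) \<subseteq> {0<..}" using s_pos by (auto intro: less_trans)
  qed
  have "continuous_on {s N<..} (plin s v)" for N
  proof -
    have "continuous_on {s N<..} (\<lambda>t. \<Sum>n<Suc (Suc N). v n * tent s n t)"
      by (intro continuous_intros tent_cont)
    moreover have "plin s v t = (\<Sum>n<Suc (Suc N). v n * tent s n t)" if "t \<in> {s N<..}" for t
    proof -
      have "s (Suc N) \<le> t" using that s_dec[of N] by auto
      then show ?thesis using that s_pos[of N]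
        by (intro plin_eq) (auto intro: tent_zero_above)
    qed
    ultimately show ?thesis using continuous_on_cong by (metis (no_types, lifting))
  qed
  then show ?thesis unfolding U
    by (intro continuous_on_open_Union) auto
qed

end



lemma ae_cont_eq:
  fixes M :: "('a::metric_space) measure" and f h :: "'a \<Rightarrow> real"
  assumes space: "space M = UNIV" and Borel: "sets borel \<subseteq> sets M"
    and null_dense: "\<forall>E\<in>sets M. emeasure M E = 0 \<longrightarrow> closure (UNIV - E) = UNIV"
    and U: "open U" and f: "continuous_on U f" and h: "continuous_on U h"
    and ae: "AE x in M. f x = h x"
  shows "\<forall>x\<in>U. f x = h x"
proof -
  define Ob where "Ob = {x \<in> U. f x \<noteq> h x}"
  have c: "continuous_on U (\<lambda>x. f x - h x)" using f h by (intro continuous_intros)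
  have "Ob = (\<lambda>x. f x - h x) -` (- {0}) \<inter> U" unfolding Ob_def by auto
  moreover have "open ((\<lambda>x. f x - h x) -` (- {0}) \<inter> U)"
    using c U continuous_on_open_vimage[of U "\<lambda>x. f x - h x"] by auto
  ultimately have oOb: "open Ob" by simp
  then have "Ob \<in> sets borel" by (rule borel_open)
  then have sOb: "Ob \<in> sets M" using Borel by blast
  have ae2: "AE x in M. x \<in> U \<longrightarrow> f x = h x" using ae by (rule eventually_mono) simp
  have "{x \<in> space M. \<not> (x \<in> U \<longrightarrow> f x = h x)} = Ob" unfolding Ob_def space by auto
  then have "emeasure M Ob = 0" using AE_iff_measurable[OF sOb, of "\<lambda>x. x \<in> U \<longrightarrow> f x = h x"] ae2 by simp
  then have "closure (UNIV - Ob) = UNIV" using null_dense sOb by simp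
  moreover have "closed (UNIV - Ob)" using oOb by (simp add: closed_Diff)
  ultimately have "UNIV - Ob = UNIV" using closure_closed[of "UNIV - Ob"] by simp
  then have "Ob = {}" by auto
  then show ?thesis unfolding Ob_def by auto
qed

lemma meas_transfer:
  fixes M :: "('a::metric_space) measure"
  assumes "space M = UNIV" "sets borel \<subseteq> sets M" "f \<in> borel_measurable borel"
  shows "f \<in> borel_measurable M"
  using assms unfolding measurable_def by auto

lemma uc_compact_support:
  fixes f :: "'a::metric_space \<Rightarrow> real"
  assumes f: "continuous_on UNIV f" and S: "compact S" and z: "\<forall>x. x \<notin> S \<longrightarrow> f x = 0"
  shows "uniformly_continuous_on UNIV f"
  unfolding uniformly_continuous_on_def
proof (intro allI impI)
  fix \<epsilon> :: real assume \<epsilon>: "0 < \<epsilon>"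
  define G where "G x = {z. dist (f z) (f x) < \<epsilon>/2}" for x
  have oG: "open (G x)" for x
    unfolding G_def dist_real_def by (intro open_Collect_less continuous_intros f)
  have cov: "S \<subseteq> \<Union>(G ` S)" unfolding G_def using \<epsilon> by auto
  obtain e where e: "0 < e" "\<And>x. x \<in> S \<Longrightarrow> \<exists>G' \<in> G ` S. ball x e \<subseteq> G'"
  proof -
    have oG': "\<And>B. B \<in> G ` S \<Longrightarrow> open B" using oG by auto
    show ?thesis
      apply (rule Heine_Borel_lemma[OF S cov oG'])
       apply assumption
      apply (rule that)
       apply assumption
      apply assumption
      done
  qed
  have key: "dist (f x') (f x) < \<epsilon>" if "x \<in> S" "dist x' x < e" for x x'
  proof -
    from e(2)[OF that(1)] obtain c where "ball x e \<subseteq> G c" by blast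
    moreover have "x \<in> ball x e" "x' \<in> ball x e" using e that by (auto simp: dist_commute)
    ultimately have "x \<in> G c" "x' \<in> G c" by blast+
    then have "dist (f x) (f c) < \<epsilon>/2" "dist (f x') (f c) < \<epsilon>/2" unfolding G_def by auto
    then show ?thesis unfolding dist_real_def by linarith
  qed
  show "\<exists>d>0. \<forall>x\<in>UNIV. \<forall>x'\<in>UNIV. dist x' x < d \<longrightarrow> dist (f x') (f x) < \<epsilon>"
  proof (intro exI[of _ e] conjI ballI impI)
    show "0 < e" by fact
    fix x x' :: 'a assume d: "dist x' x < e"
    show "dist (f x') (f x) < \<epsilon>"
    proof (cases "x \<in> S")
      case True then show ?thesis using key d by blast
    next
      case F: False
      show ?thesis
      proof (cases "x' \<in> S")
        case True then show ?thesis using key[of x' x] d by (simp add: dist_commute)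
      next
        case False then show ?thesis using F z \<epsilon> by simp
      qed
    qed
  qed
qed

definition enc :: "(nat \<Rightarrow> real) \<Rightarrow> nat \<Rightarrow> real" where
  "enc g q = 1 - (1 - g (fst (prod_decode q))) / (real (snd (prod_decode q)) + 1)"

lemma enc_encode: "enc g (prod_encode (n, i)) = 1 - (1 - g n) / (real i + 1)"
  unfolding enc_def by simp

lemma enc_bound: "\<forall>n. g n \<in> {-1<..<1} \<Longrightarrow> -1 \<le> enc g q \<and> enc g q \<le> 1"
proof -
  assume a: "\<forall>n. g n \<in> {-1<..<1}"
  obtain n i where q: "q = prod_encode (n, i)" by (metis prod_decode_inverse surj_pair)
  have "0 < 1 - g n" "1 - g n < 2" using a by auto
  moreover have "1 \<le> real i + 1" by simp
  ultimately have "0 \<le> (1 - g n) / (real i + 1)" "(1 - g n) / (real i + 1) \<le> 2"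
    by (auto simp: divide_le_eq)
  then show ?thesis unfolding q enc_encode by auto
qed

lemma enc_tendsto:
  assumes a: "\<forall>n. g n \<in> {-1<..<1}" and lim: "g \<longlonglongrightarrow> 1"
  shows "enc g \<longlonglongrightarrow> 1"
proof (rule LIMSEQ_I)
  fix r :: real assume r: "0 < r"
  obtain N0 where N0: "\<forall>n\<ge>N0. norm (g n - 1) < r" using LIMSEQ_D[OF lim r] by blast
  obtain I0 :: nat where I0: "2 / r < real I0" using reals_Archimedean2 by blast
  define Q where "Q = Suc (Max (prod_encode ` ({..<N0} \<times> {..<I0}) \<union> {0}))"
  show "\<exists>no. \<forall>q\<ge>no. norm (enc g q - 1) < r"
  proof (intro exI allI impI)
    fix q assume q: "Q \<le> q"
    obtain n i where nq: "q = prod_encode (n, i)" by (metis prod_decode_inverse surj_pair)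
    have "enc g q - 1 = - ((1 - g n) / (real i + 1))" unfolding nq enc_encode by simp
    then have eq: "norm (enc g q - 1) = \<bar>1 - g n\<bar> / (real i + 1)" by (simp add: abs_divide)
    have "N0 \<le> n \<or> I0 \<le> i"
    proof (rule ccontr)
      assume "\<not> (N0 \<le> n \<or> I0 \<le> i)"
      then have "n < N0" "i < I0" by auto
      then have "prod_encode (n, i) \<in> prod_encode ` ({..<N0} \<times> {..<I0}) \<union> {0}" by auto
      then have "prod_encode (n, i) \<le> Max (prod_encode ` ({..<N0} \<times> {..<I0}) \<union> {0})"
        by (intro Max_ge) auto
      then show False using q nq unfolding Q_def by simp
    qed
    then show "norm (enc g q - 1) < r"
    proof
      assume "N0 \<le> n"
      then have "\<bar>1 - g n\<bar> < r" using N0 by (simp add: abs_minus_commute)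
      moreover have "\<bar>1 - g n\<bar> / (real i + 1) \<le> \<bar>1 - g n\<bar>"
        using mult_left_mono[of 1 "real i + 1" "\<bar>1 - g n\<bar>"] by (simp add: divide_le_eq)
      ultimately show ?thesis using eq by linarith
    next
      assume i: "I0 \<le> i"
      have "-1 < g n" "g n < 1" using a[rule_format, of n] by auto
      then have "\<bar>1 - g n\<bar> < 2" by (simp add: abs_less_iff)
      moreover have "2 / r < real i + 1" using I0 i by linarith
      then have "2 < r * (real i + 1)" using r by (simp add: divide_less_eq mult.commute)
      ultimately have "\<bar>1 - g n\<bar> < r * (real i + 1)" by linarith
      then show ?thesis using eq by (simp add: divide_less_eq)
    qed
  qed
qed



lemma prod3_bound:
  fixes a b c a' b' c' :: real
  assumes "\<bar>b\<bar> \<le> 1" "\<bar>c\<bar> \<le> 1" "\<bar>a'\<bar> \<le> 1" "\<bar>b'\<bar> \<le> 1"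
  shows "\<bar>a * b * c - a' * b' * c'\<bar> \<le> \<bar>a - a'\<bar> + \<bar>b - b'\<bar> + \<bar>c - c'\<bar>"
proof -
  have eq: "a * b * c - a' * b' * c' = (a - a') * (b * c) + a' * (b - b') * c + a' * b' * (c - c')"
    by (simp add: algebra_simps)
  have "\<bar>(a - a') * (b * c)\<bar> \<le> \<bar>a - a'\<bar>"
    using assms by (simp add: abs_mult mult_le_one mult_left_le)
  moreover have "\<bar>a' * (b - b') * c\<bar> \<le> \<bar>b - b'\<bar>"
  proof -
    have "\<bar>a' * c\<bar> \<le> 1" using assms by (simp add: abs_mult mult_le_one)
    then have "\<bar>(b - b') * (a' * c)\<bar> \<le> \<bar>b - b'\<bar>" by (simp add: abs_mult mult_left_le)
    then show ?thesis by (simp add: algebra_simps)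
  qed
  moreover have "\<bar>a' * b' * (c - c')\<bar> \<le> \<bar>c - c'\<bar>"
  proof -
    have "\<bar>a' * b'\<bar> \<le> 1" using assms by (simp add: abs_mult mult_le_one)
    then have "\<bar>(c - c') * (a' * b')\<bar> \<le> \<bar>c - c'\<bar>" by (simp add: abs_mult mult_left_le)
    then show ?thesis by (simp add: algebra_simps)
  qed
  ultimately show ?thesis unfolding eq by linarith
qed

definition clamp :: "real \<Rightarrow> real" where "clamp z = max 0 (min 1 z)"

lemma clamp_lip: "\<bar>clamp u - clamp v\<bar> \<le> \<bar>u - v\<bar>"
  unfolding clamp_def max_def min_def by auto

lemma clamp_range: "0 \<le> clamp u \<and> clamp u \<le> 1"
  unfolding clamp_def by auto

lemma clamp_cont[continuous_intros]: "continuous_on A f \<Longrightarrow> continuous_on A (\<lambda>x. clamp (f x))"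
  unfolding clamp_def by (intro continuous_intros)

locale constr =
  fixes M :: "('a::metric_space) measure"
    and p :: real
    and g :: "'b::topological_space \<Rightarrow> (nat \<Rightarrow> real)"
    and xs :: "nat \<Rightarrow> 'a" and xinf :: 'a
    and \<delta> :: "'b \<Rightarrow> real"
  assumes space: "space M = UNIV"
    and Borel: "sets borel \<subseteq> sets M"
    and p: "1 \<le> p"
    and g_Sigma: "\<forall>y n. g y n \<in> {-1<..<1}"
    and g_inj: "inj g"
    and g_cont: "continuous_on UNIV g"
    and null_dense: "\<forall>E\<in>sets M. emeasure M E = 0 \<longrightarrow> closure (UNIV - E) = UNIV"
    and r_decr: "\<forall>m\<ge>1. dist (xs (Suc m)) xinf < dist (xs m) xinf"
    and r_lim: "(\<lambda>m. dist (xs m) xinf) \<longlonglongrightarrow> 0"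
    and ball_meas: "emeasure M (ball xinf (dist (xs 1) xinf)) \<le> 1"
    and \<delta>_cont: "continuous_on UNIV \<delta>"
    and \<delta>_range: "\<forall>y. 0 < \<delta> y \<and> \<delta> y < 1"
begin

definition "s n = dist (xs (Suc n)) xinf"
definition "vI n = real n + 1"
definition "I t = plin s vI t"
definition "J d = - log 2 d"
definition "C d t = clamp (I t - 2 * J d - 2)"
definition "w y n = (if even n then 1 else enc (g y) (n div 2))"
definition "E y t = plin s (w y) t"
definition "\<Phi> y x = (if x = xinf then \<delta> y else \<delta> y * C (\<delta> y) (dist x xinf) * E y (dist x xinf))"
definition "B = ball xinf (s 0)"

lemma s_dec': "s (Suc n) < s n"
  unfolding s_def using r_decr by simp

lemma s_pos': "0 < s n"
proof -
  have "s (Suc n) < s n" by (rule s_dec')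
  moreover have "0 \<le> s (Suc n)" unfolding s_def by simp
  ultimately show ?thesis by linarith
qed

lemma s_lim': "s \<longlonglongrightarrow> 0"
  unfolding s_def using LIMSEQ_Suc[OF r_lim] .

sublocale pl s
  by unfold_locales (auto intro: s_dec' s_pos' s_lim')

lemma B_alt: "B = ball xinf (dist (xs 1) xinf)"
  unfolding B_def s_def by simp

lemma B_sets: "B \<in> sets M"
proof -
  have "open B" unfolding B_def by simp
  then have "B \<in> sets borel" by (rule borel_open)
  then show ?thesis using Borel by blast
qed

lemma B_meas: "emeasure M B \<le> 1" using ball_meas B_alt by simp

lemma B_fin: "emeasure M B < \<infinity>" using B_meas
  by (rule le_less_trans) simp

lemma B_measure: "measure M B \<le> 1"
proof -
  have "emeasure M B = ennreal (measure M B)" using B_fin by (intro emeasure_eq_ennreal_measure) simp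
  then show ?thesis using B_meas by simp
qed

lemma w_bound: "-1 \<le> w y n \<and> w y n \<le> 1"
  unfolding w_def using enc_bound[of "g y"] g_Sigma by auto

lemma E_bound: "0 < t \<Longrightarrow> -1 \<le> E y t \<and> E y t \<le> 1"
  unfolding E_def using plin_bound_all[of "-1" "w y" 1 t] w_bound by auto

lemma C_range: "0 \<le> C d t \<and> C d t \<le> 1"
  unfolding C_def by (rule clamp_range)

lemma \<Phi>_bound: "\<bar>\<Phi> y x\<bar> \<le> \<delta> y"
proof -
  have d: "0 < \<delta> y" using \<delta>_range by auto
  show ?thesis
  proof (cases "x = xinf")
    case True then show ?thesis using d by (simp add: \<Phi>_def)
  next
    case False
    then have t: "0 < dist x xinf" by simp
    have "\<bar>C (\<delta> y) (dist x xinf)\<bar> \<le> 1" "\<bar>E y (dist x xinf)\<bar> \<le> 1"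
      using C_range[of "\<delta> y" "dist x xinf"] E_bound[OF t, of y] by auto
    then have "\<bar>C (\<delta> y) (dist x xinf) * E y (dist x xinf)\<bar> \<le> 1"
      unfolding abs_mult by (intro mult_le_one) auto
    then have "\<delta> y * \<bar>C (\<delta> y) (dist x xinf) * E y (dist x xinf)\<bar> \<le> \<delta> y"
      using d by (simp add: mult_left_le)
    then show ?thesis using False d by (simp add: \<Phi>_def abs_mult mult.assoc)
  qed
qed

lemma J_pos: "0 < J (\<delta> y)"
  unfolding J_def using \<delta>_range by auto

lemma \<Phi>_out: "x \<notin> B \<Longrightarrow> \<Phi> y x = 0"
proof -
  assume "x \<notin> B"
  then have t: "s 0 \<le> dist x xinf" unfolding B_def by (simp add: dist_commute)
  then have x: "x \<noteq> xinf" using s_pos'[of 0] by auto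
  have "I (dist x xinf) = 1" unfolding I_def using plin_big[OF t] by (simp add: vI_def)
  then have "C (\<delta> y) (dist x xinf) = 0" unfolding C_def clamp_def using J_pos[of y] by simp
  then show ?thesis using x by (simp add: \<Phi>_def)
qed

lemma xinf_B: "xinf \<in> B" unfolding B_def using s_pos' by simp

lemma \<Phi>_cont: "continuous_on (UNIV - {xinf}) (\<Phi> y)"
proof -
  have d: "continuous_on (UNIV - {xinf}) (\<lambda>x. dist x xinf)" by (intro continuous_intros)
  have im: "(\<lambda>x. dist x xinf) ` (UNIV - {xinf}) \<subseteq> {0<..}" by auto
  have cI: "continuous_on (UNIV - {xinf}) (\<lambda>x. I (dist x xinf))"
    unfolding I_def using continuous_on_compose2[OF plin_cont d im] .
  have cE: "continuous_on (UNIV - {xinf}) (\<lambda>x. E y (dist x xinf))"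
    unfolding E_def using continuous_on_compose2[OF plin_cont d im] .
  have cC: "continuous_on (UNIV - {xinf}) (\<lambda>x. C (\<delta> y) (dist x xinf))"
    unfolding C_def by (intro clamp_cont continuous_on_diff cI continuous_on_const)
  have "continuous_on (UNIV - {xinf}) (\<lambda>x. \<delta> y * C (\<delta> y) (dist x xinf) * E y (dist x xinf))"
    by (intro continuous_on_mult continuous_on_const cC cE)
  then show ?thesis by (rule continuous_on_eq) (simp add: \<Phi>_def)
qed

lemma \<Phi>_meas: "\<Phi> y \<in> borel_measurable M"
proof -
  have "(\<lambda>x. if x \<in> UNIV - {xinf} then \<Phi> y x else \<delta> y) \<in> borel_measurable borel"
  proof (rule borel_measurable_continuous_on_if)
    show "UNIV - {xinf} \<in> sets borel" by (rule borel_open) (simp add: open_Diff)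
    show "continuous_on (UNIV - {xinf}) (\<Phi> y)" by (rule \<Phi>_cont)
    show "continuous_on (- (UNIV - {xinf})) (\<lambda>x. \<delta> y)" by (rule continuous_on_const)
  qed
  moreover have "(\<lambda>x. if x \<in> UNIV - {xinf} then \<Phi> y x else \<delta> y) = \<Phi> y"
    by (rule ext) (simp add: \<Phi>_def)
  ultimately show ?thesis using meas_transfer[OF space Borel] by simp
qed


lemma \<delta>_pos: "0 < \<delta> y" using \<delta>_range by auto

lemma J_lower: "\<delta> y \<le> 2 powr (- real k + 1) \<Longrightarrow> real k - 1 \<le> J (\<delta> y)"
proof -
  assume a: "\<delta> y \<le> 2 powr (- real k + 1)"
  have "log 2 (\<delta> y) \<le> log 2 (2 powr (- real k + 1))"
    by (rule log_le_cancel_iff[THEN iffD2]) (use a \<delta>_pos[of y] in auto)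
  then show ?thesis unfolding J_def using log_powr_cancel[of 2 "- real k + 1"] by linarith
qed

lemma J_upper: "2 powr (- real k) \<le> \<delta> y \<Longrightarrow> J (\<delta> y) \<le> real k"
proof -
  assume a: "2 powr (- real k) \<le> \<delta> y"
  have "log 2 (2 powr (- real k)) \<le> log 2 (\<delta> y)"
    by (rule log_le_cancel_iff[THEN iffD2]) (use a \<delta>_pos[of y] in auto)
  then show ?thesis unfolding J_def using log_powr_cancel[of 2 "- real k"] by linarith
qed

lemma clamp_one: "1 \<le> z \<Longrightarrow> clamp z = 1" unfolding clamp_def by simp
lemma clamp_zero: "z \<le> 0 \<Longrightarrow> clamp z = 0" unfolding clamp_def by simp

lemma I_node: "I (s n) = real n + 1"
  unfolding I_def vI_def by (rule plin_node)

lemma E_node: "E y (s n) = w y n"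
  unfolding E_def by (rule plin_node)

lemma C_node: "2 * J d + 2 \<le> real n \<Longrightarrow> C d (s n) = 1"
  unfolding C_def I_node by (rule clamp_one) simp

lemma C_small:
  assumes "2 * J d + 2 \<le> real N" "0 < t" "t < s N"
  shows "C d t = 1"
proof -
  have "real N + 1 \<le> I t" unfolding I_def
    by (rule plin_bound_low1[OF _ assms(2,3)]) (auto simp: vI_def)
  then show ?thesis unfolding C_def using assms(1) by (intro clamp_one) simp
qed

lemma xs_ne: "xs (Suc n) \<noteq> xinf"
  using s_pos'[of n] unfolding s_def by auto

lemma \<Phi>_node: "\<Phi> y (xs (Suc n)) = \<delta> y * C (\<delta> y) (s n) * w y n"
  using xs_ne[of n] by (simp add: \<Phi>_def E_node s_def[symmetric])

lemma \<Phi>_xinf: "\<Phi> y xinf = \<delta> y" by (simp add: \<Phi>_def)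

lemma prop2:
  assumes k: "1 \<le> k" "\<delta> y \<le> 2 powr (- real k + 1)"
    and x: "x \<notin> ball xinf (dist (xs (2 * k)) xinf)"
  shows "\<Phi> y x = 0"
proof -
  obtain n where n: "2 * k = Suc n" using k by (cases "2 * k") auto
  have t: "s n \<le> dist x xinf" using x n unfolding s_def by (simp add: dist_commute)
  then have xne: "x \<noteq> xinf" using s_pos'[of n] by auto
  have "I (dist x xinf) \<le> real n + 1" unfolding I_def
    by (rule plin_bound_high1[OF _ t]) (auto simp: vI_def)
  moreover have "real k - 1 \<le> J (\<delta> y)" using J_lower[OF k(2)] .
  moreover have "real n + 1 = 2 * real k" using n by linarith
  ultimately have "C (\<delta> y) (dist x xinf) = 0" unfolding C_def by (intro clamp_zero) linarith
  then show ?thesis using xne by (simp add: \<Phi>_def)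
qed

lemma prop3:
  assumes k: "2 powr (- real k) \<le> \<delta> y" and j: "k < j"
  shows "\<Phi> y (xs (2 * j + 1)) = \<delta> y"
proof -
  have "J (\<delta> y) \<le> real k" using J_upper[OF k] .
  then have "2 * J (\<delta> y) + 2 \<le> real (2 * j)" using j by simp
  then have "C (\<delta> y) (s (2 * j)) = 1" by (rule C_node)
  then show ?thesis using \<Phi>_node[of y "2 * j"] by (simp add: w_def)
qed

lemma \<Phi>_pow_bound: "\<bar>\<Phi> y x\<bar> powr p \<le> \<delta> y powr p * indicator B x"
proof (cases "x \<in> B")
  case True
  have "\<bar>\<Phi> y x\<bar> powr p \<le> \<delta> y powr p"
    using \<Phi>_bound[of y x] p by (intro powr_mono2) auto
  then show ?thesis using True by simp
next
  case False then show ?thesis using \<Phi>_out by simp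
qed

lemma bound_int: "integrable M (\<lambda>x. c * indicator B x :: real)"
  using integrable_real_indicator[OF B_sets B_fin] by (rule integrable_mult_right)

lemma \<Phi>_pow_meas: "(\<lambda>x. \<bar>\<Phi> y x\<bar> powr p) \<in> borel_measurable M"
  using \<Phi>_meas[of y] by (rule measurable_abs_powr)

lemma \<Phi>_Lp: "in_Lp M p (\<Phi> y)"
  unfolding in_Lp_def
proof
  show "\<Phi> y \<in> borel_measurable M" by (rule \<Phi>_meas)
  show "integrable M (\<lambda>x. \<bar>\<Phi> y x\<bar> powr p)"
  proof (rule Bochner_Integration.integrable_bound[OF bound_int[of "\<delta> y powr p"] \<Phi>_pow_meas])
    show "AE x in M. norm (\<bar>\<Phi> y x\<bar> powr p) \<le> norm (\<delta> y powr p * indicator B x)"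
      using \<Phi>_pow_bound[of y] by (intro AE_I2) (simp add: abs_of_nonneg)
  qed
qed

lemma \<Phi>_norm: "Lp_norm M p (\<Phi> y) \<le> \<delta> y"
proof -
  have "(\<integral>x. \<bar>\<Phi> y x\<bar> powr p \<partial>M) \<le> (\<integral>x. \<delta> y powr p * indicator B x \<partial>M)"
    by (rule integral_mono'[OF bound_int]) (use \<Phi>_pow_bound in auto)
  also have "\<dots> = \<delta> y powr p * measure M B" by (simp add: space)
  also have "\<dots> \<le> \<delta> y powr p" using B_measure by (simp add: mult_left_le)
  finally have i: "(\<integral>x. \<bar>\<Phi> y x\<bar> powr p \<partial>M) \<le> \<delta> y powr p" .
  have "Lp_norm M p (\<Phi> y) \<le> (\<delta> y powr p) powr (1 / p)"
    unfolding Lp_norm_def using p i by (intro powr_mono2) auto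
  also have "\<dots> = \<delta> y" using p \<delta>_pos[of y] by (simp add: powr_powr)
  finally show ?thesis .
qed


lemma open_punct: "open (UNIV - {xinf})" by (simp add: open_Diff)

lemma big_N: "\<exists>N::nat. a \<le> real N \<and> b \<le> real N"
proof -
  obtain N :: nat where "max a b \<le> real N" using real_arch_simple by blast
  then show ?thesis by auto
qed

lemma \<Phi>_inj:
  assumes ae: "AE x in M. \<Phi> y x = \<Phi> y' x"
  shows "y = y'"
proof -
  have eq: "\<forall>x\<in>UNIV - {xinf}. \<Phi> y x = \<Phi> y' x"
    by (rule ae_cont_eq[OF space Borel null_dense open_punct \<Phi>_cont \<Phi>_cont ae])
  then have node: "\<Phi> y (xs (Suc n)) = \<Phi> y' (xs (Suc n))" for n using xs_ne[of n] by auto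
  obtain N :: nat where N: "2 * J (\<delta> y) + 2 \<le> real N" "2 * J (\<delta> y') + 2 \<le> real N"
    using big_N by blast
  have Cn: "C (\<delta> y) (s n) = 1" "C (\<delta> y') (s n) = 1" if "N \<le> n" for n
    using C_node N that by (auto intro: order.trans)
  have dd: "\<delta> y = \<delta> y'" using node[of "2*N"] Cn[of "2*N"] by (simp add: \<Phi>_node w_def)
  have ee: "enc (g y) q = enc (g y') q" if "N \<le> q" for q
  proof -
    have "N \<le> 2*q+1" using that by simp
    then have "\<delta> y * enc (g y) q = \<delta> y' * enc (g y') q"
      using node[of "2*q+1"] Cn[of "2*q+1"] by (simp add: \<Phi>_node w_def)
    then show ?thesis using dd \<delta>_pos[of y] by simp
  qed
  have "g y i = g y' i" for i
  proof -
    have "N \<le> prod_encode (i, N)" by (rule le_prod_encode_2)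
    then have "enc (g y) (prod_encode (i,N)) = enc (g y') (prod_encode (i,N))" by (rule ee)
    then have "(1 - g y i) / (real N + 1) = (1 - g y' i) / (real N + 1)"
      by (simp add: enc_encode)
    then show ?thesis by (simp add: divide_cancel_right)
  qed
  then have "g y = g y'" by (rule ext)
  then show ?thesis using g_inj by (simp add: inj_eq)
qed

lemma w_tendsto:
  assumes "g y \<in> c1Sigma"
  shows "w y \<longlonglongrightarrow> 1"
proof (rule LIMSEQ_I)
  fix r :: real assume r: "0 < r"
  have "enc (g y) \<longlonglongrightarrow> 1"
    using assms g_Sigma unfolding c1Sigma_def by (intro enc_tendsto) auto
  then obtain Q where Q: "\<forall>q\<ge>Q. norm (enc (g y) q - 1) < r" using LIMSEQ_D r by blast
  show "\<exists>no. \<forall>n\<ge>no. norm (w y n - 1) < r"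
  proof (intro exI allI impI)
    fix n assume n: "2 * Q \<le> n"
    show "norm (w y n - 1) < r"
    proof (cases "even n")
      case True then show ?thesis using r by (simp add: w_def)
    next
      case False
      have "Q \<le> n div 2" using n by simp
      then show ?thesis using Q False by (simp add: w_def)
    qed
  qed
qed

lemma cont_of_c1:
  assumes c1: "g y \<in> c1Sigma"
  shows "continuous_on UNIV (\<Phi> y)"
proof -
  have at: "isCont (\<Phi> y) xinf"
    unfolding continuous_at_eps_delta
  proof (intro allI impI)
    fix \<epsilon> :: real assume \<epsilon>: "0 < \<epsilon>"
    obtain N1 where N1: "\<forall>n\<ge>N1. norm (w y n - 1) < \<epsilon>/2"
      using LIMSEQ_D[OF w_tendsto[OF c1], of "\<epsilon>/2"] \<epsilon> by auto
    obtain N2 :: nat where N2: "2 * J (\<delta> y) + 2 \<le> real N2" using real_arch_simple by blast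
    define N where "N = max N1 N2"
    have NN2: "2 * J (\<delta> y) + 2 \<le> real N" using N2 unfolding N_def by simp
    show "\<exists>d>0. \<forall>x'. dist x' xinf < d \<longrightarrow> dist (\<Phi> y x') (\<Phi> y xinf) < \<epsilon>"
    proof (intro exI conjI allI impI)
      show "0 < s N" by (rule s_pos')
      fix x' assume x': "dist x' xinf < s N"
      show "dist (\<Phi> y x') (\<Phi> y xinf) < \<epsilon>"
      proof (cases "x' = xinf")
        case True then show ?thesis using \<epsilon> by simp
      next
        case False
        then have t: "0 < dist x' xinf" by simp
        have C1: "C (\<delta> y) (dist x' xinf) = 1" by (rule C_small[OF NN2 t x'])
        have "1 - \<epsilon>/2 \<le> E y (dist x' xinf) \<and> E y (dist x' xinf) \<le> 1 + \<epsilon>/2"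
          unfolding E_def
        proof (rule plin_bound_low[OF _ t x'])
          show "\<forall>m\<ge>N. 1 - \<epsilon> / 2 \<le> w y m \<and> w y m \<le> 1 + \<epsilon> / 2"
          proof (intro allI impI)
            fix m assume "N \<le> m"
            then have "norm (w y m - 1) < \<epsilon>/2" using N1 unfolding N_def by simp
            then have "-(\<epsilon>/2) < w y m - 1 \<and> w y m - 1 < \<epsilon>/2" unfolding real_norm_def abs_less_iff by simp
            then show "1 - \<epsilon> / 2 \<le> w y m \<and> w y m \<le> 1 + \<epsilon> / 2" by linarith
          qed
        qed
        then have e: "\<bar>E y (dist x' xinf) - 1\<bar> \<le> \<epsilon>/2" by (simp only: abs_le_iff) linarith
        have "\<Phi> y x' - \<Phi> y xinf = \<delta> y * (E y (dist x' xinf) - 1)"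
          using False C1 by (simp add: \<Phi>_def algebra_simps)
        then have "dist (\<Phi> y x') (\<Phi> y xinf) = \<delta> y * \<bar>E y (dist x' xinf) - 1\<bar>"
          using \<delta>_pos[of y] by (simp add: dist_real_def abs_mult)
        also have "\<dots> \<le> \<bar>E y (dist x' xinf) - 1\<bar>" using \<delta>_range[rule_format, of y] by (intro mult_left_le_one_le) auto
        also have "\<dots> < \<epsilon>" using e \<epsilon> by linarith
        finally show ?thesis .
      qed
    qed
  qed
  have "isCont (\<Phi> y) x" for x
  proof (cases "x = xinf")
    case True then show ?thesis using at by simp
  next
    case False
    then show ?thesis using \<Phi>_cont[of y] continuous_on_eq_continuous_at[OF open_punct] by auto
  qed
  then show ?thesis by (intro continuous_at_imp_continuous_on) auto
qed

lemma strict_mono_enc0: "strict_mono (\<lambda>i. prod_encode (i, 0))"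
  unfolding strict_mono_Suc_iff by (simp add: prod_encode_def)

lemma c1_of_inC:
  assumes "in_C M (\<Phi> y)"
  shows "g y \<in> c1Sigma"
proof -
  obtain h where h: "continuous_on UNIV h" "AE x in M. \<Phi> y x = h x"
    using assms unfolding in_C_def by blast
  have hc: "continuous_on (UNIV - {xinf}) h" using h(1) by (rule continuous_on_subset) simp
  have eqh: "\<forall>x\<in>UNIV - {xinf}. \<Phi> y x = h x"
    by (rule ae_cont_eq[OF space Borel null_dense open_punct \<Phi>_cont hc h(2)])
  have xl: "(\<lambda>n. xs (Suc n)) \<longlonglongrightarrow> xinf"
    using s_lim' unfolding s_def by (rule tendsto_dist_iff[THEN iffD2])
  have hx: "isCont h xinf" using h(1) continuous_on_eq_continuous_at[OF open_UNIV, of h] by blast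
  have "(\<lambda>n. h (xs (Suc n))) \<longlonglongrightarrow> h xinf" by (rule isCont_tendsto_compose[OF hx xl])
  moreover have "(\<lambda>n. h (xs (Suc n))) = (\<lambda>n. \<Phi> y (xs (Suc n)))"
    using eqh xs_ne by auto
  ultimately have al: "(\<lambda>n. \<Phi> y (xs (Suc n))) \<longlonglongrightarrow> h xinf" by simp
  obtain N :: nat where N: "2 * J (\<delta> y) + 2 \<le> real N" using real_arch_simple by blast
  have an: "\<Phi> y (xs (Suc n)) = \<delta> y * w y n" if "N \<le> n" for n
    using C_node[of "\<delta> y" n] N that \<Phi>_node[of y n] by simp
  have ev: "((\<lambda>n. \<Phi> y (xs (Suc n))) \<circ> (\<lambda>j. 2 * j)) \<longlonglongrightarrow> h xinf"
    by (rule LIMSEQ_subseq_LIMSEQ[OF al]) (simp add: strict_mono_Suc_iff)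
  moreover have "eventually (\<lambda>j. \<delta> y = ((\<lambda>n. \<Phi> y (xs (Suc n))) \<circ> (\<lambda>j. 2 * j)) j) sequentially"
    unfolding eventually_sequentially using an by (intro exI[of _ N]) (simp add: w_def)
  then have "((\<lambda>n. \<Phi> y (xs (Suc n))) \<circ> (\<lambda>j. 2 * j)) \<longlonglongrightarrow> \<delta> y"
    by (rule Lim_transform_eventually[OF tendsto_const])
  ultimately have hd: "h xinf = \<delta> y" by (rule LIMSEQ_unique)
  have od: "((\<lambda>n. \<Phi> y (xs (Suc n))) \<circ> (\<lambda>j. 2 * j + 1)) \<longlonglongrightarrow> \<delta> y"
    using LIMSEQ_subseq_LIMSEQ[OF al, of "\<lambda>j. 2 * j + 1"] hd by (simp add: strict_mono_Suc_iff)
  have "eventually (\<lambda>q. ((\<lambda>n. \<Phi> y (xs (Suc n))) \<circ> (\<lambda>j. 2 * j + 1)) q = \<delta> y * enc (g y) q) sequentially"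
    unfolding eventually_sequentially using an by (intro exI[of _ N]) (simp add: w_def)
  then have "(\<lambda>q. \<delta> y * enc (g y) q) \<longlonglongrightarrow> \<delta> y"
    by (rule Lim_transform_eventually[OF od])
  then have "(\<lambda>q. (1 / \<delta> y) * (\<delta> y * enc (g y) q)) \<longlonglongrightarrow> (1 / \<delta> y) * \<delta> y"
    by (intro tendsto_mult tendsto_const)
  then have el: "enc (g y) \<longlonglongrightarrow> 1" using \<delta>_pos[of y] by simp
  have "(enc (g y) \<circ> (\<lambda>i. prod_encode (i, 0))) \<longlonglongrightarrow> 1"
    by (rule LIMSEQ_subseq_LIMSEQ[OF el strict_mono_enc0])
  moreover have "enc (g y) \<circ> (\<lambda>i. prod_encode (i, 0)) = g y"
    by (rule ext) (simp add: enc_encode)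
  ultimately have "g y \<longlonglongrightarrow> 1" by simp
  then show ?thesis unfolding c1Sigma_def using g_Sigma by auto
qed

lemma c1_iff_C: "g y \<in> c1Sigma \<longleftrightarrow> in_C M (\<Phi> y)"
proof
  assume "g y \<in> c1Sigma"
  then have "continuous_on UNIV (\<Phi> y)" by (rule cont_of_c1)
  then show "in_C M (\<Phi> y)" unfolding in_C_def by (intro exI[of _ "\<Phi> y"]) simp
next
  assume "in_C M (\<Phi> y)" then show "g y \<in> c1Sigma" by (rule c1_of_inC)
qed


lemma compact_part:
  assumes "\<exists>K. compact K \<and> ball xinf (dist (xs 1) xinf) \<subseteq> K"
  shows "compact (closure {x. \<Phi> y x \<noteq> 0}) \<and> (g y \<in> c1Sigma \<longleftrightarrow> in_Cu M (\<Phi> y))"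
proof -
  from assms obtain K where K: "compact K" "ball xinf (dist (xs 1) xinf) \<subseteq> K" by blast
  have KB: "B \<subseteq> K" using K(2) B_alt by simp
  have sup0: "{x. \<Phi> y x \<noteq> 0} \<subseteq> B"
  proof
    fix x assume "x \<in> {x. \<Phi> y x \<noteq> 0}"
    then have "\<Phi> y x \<noteq> 0" by simp
    then show "x \<in> B" using \<Phi>_out by blast
  qed
  have sup: "{x. \<Phi> y x \<noteq> 0} \<subseteq> K" using sup0 KB by (rule subset_trans)
  have cK: "closed K" using K(1) by (rule compact_imp_closed)
  have "closure {x. \<Phi> y x \<noteq> 0} \<subseteq> closure K" using sup by (rule closure_mono)
  also have "closure K = K" using cK by (rule closure_closed)
  finally have sub: "closure {x. \<Phi> y x \<noteq> 0} \<subseteq> K" .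
  have eqc: "closure {x. \<Phi> y x \<noteq> 0} \<inter> K = closure {x. \<Phi> y x \<noteq> 0}"
    using sub by (rule Int_absorb2)
  have "compact (closure {x. \<Phi> y x \<noteq> 0} \<inter> K)"
    using closed_closure K(1) by (rule closed_Int_compact)
  then have cpt: "compact (closure {x. \<Phi> y x \<noteq> 0})" by (simp only: eqc)
  have "g y \<in> c1Sigma \<longleftrightarrow> in_Cu M (\<Phi> y)"
  proof
    assume "g y \<in> c1Sigma"
    then have c: "continuous_on UNIV (\<Phi> y)" by (rule cont_of_c1)
    have z: "\<forall>x. x \<notin> closure {x. \<Phi> y x \<noteq> 0} \<longrightarrow> \<Phi> y x = 0"
    proof (intro allI impI)
      fix x assume nx: "x \<notin> closure {x. \<Phi> y x \<noteq> 0}"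
      show "\<Phi> y x = 0"
      proof (rule ccontr)
        assume "\<Phi> y x \<noteq> 0"
        then have "x \<in> {x. \<Phi> y x \<noteq> 0}" by simp
        then have "x \<in> closure {x. \<Phi> y x \<noteq> 0}" by (rule subsetD[OF closure_subset])
        then show False using nx by simp
      qed
    qed
    have u: "uniformly_continuous_on UNIV (\<Phi> y)" by (rule uc_compact_support[OF c cpt z])
    have ae: "AE x in M. \<Phi> y x = \<Phi> y x" by (rule AE_I2) (rule refl)
    show "in_Cu M (\<Phi> y)" unfolding in_Cu_def by (rule exI[of _ "\<Phi> y"], rule conjI[OF u ae])
  next
    assume "in_Cu M (\<Phi> y)"
    then obtain h where h: "uniformly_continuous_on UNIV h" "AE x in M. \<Phi> y x = h x"
      unfolding in_Cu_def by blast
    have "continuous_on UNIV h" using h(1) by (rule uniformly_continuous_imp_continuous)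
    then have "in_C M (\<Phi> y)" unfolding in_C_def using h(2) by (intro exI[of _ h] conjI)
    then show "g y \<in> c1Sigma" by (rule c1_of_inC)
  qed
  then show ?thesis using cpt by simp
qed

definition "Dd y y0 N = \<bar>\<delta> y - \<delta> y0\<bar> + 2 * \<bar>J (\<delta> y) - J (\<delta> y0)\<bar> + (\<Sum>n\<le>N. \<bar>w y n - w y0 n\<bar>)"
definition "A N = ball xinf (s N) - {xinf}"

lemma Dd_nonneg: "0 \<le> Dd y y0 N"
  unfolding Dd_def by (intro add_nonneg_nonneg sum_nonneg) auto

lemma pw_bound:
  "\<bar>\<Phi> y x - \<Phi> y0 x\<bar> powr p \<le> Dd y y0 N powr p * indicator B x + 2 powr p * indicator (A N) x"
proof -
  have pp: "0 \<le> p" using p by simp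
  have nn: "0 \<le> Dd y y0 N powr p * indicator B x" "0 \<le> 2 powr p * indicator (A N) x"
    by (auto simp: indicator_def)
  show ?thesis
  proof (cases "x \<in> B")
    case False
    then show ?thesis using \<Phi>_out[OF False] nn by simp
  next
    case xB: True
    show ?thesis
    proof (cases "x \<in> A N")
      case True
      have "\<bar>\<Phi> y x - \<Phi> y0 x\<bar> \<le> 2"
        using \<Phi>_bound[of y x] \<Phi>_bound[of y0 x] \<delta>_range[rule_format, of y] \<delta>_range[rule_format, of y0]
        by (simp only: abs_le_iff) linarith
      then have "\<bar>\<Phi> y x - \<Phi> y0 x\<bar> powr p \<le> 2 powr p" using pp by (intro powr_mono2) auto
      moreover have "2 powr p * indicator (A N) x = 2 powr p" using True by simp
      ultimately show ?thesis using nn(1) by linarith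
    next
      case xA: False
      have "\<bar>\<Phi> y x - \<Phi> y0 x\<bar> \<le> Dd y y0 N"
      proof (cases "x = xinf")
        case True
        have "\<bar>\<Phi> y x - \<Phi> y0 x\<bar> = \<bar>\<delta> y - \<delta> y0\<bar>" using True by (simp add: \<Phi>_xinf)
        moreover have "0 \<le> (\<Sum>n\<le>N. \<bar>w y n - w y0 n\<bar>)" by (intro sum_nonneg) simp
        moreover have "0 \<le> \<bar>J (\<delta> y) - J (\<delta> y0)\<bar>" by simp
        ultimately show ?thesis unfolding Dd_def by simp
      next
        case xne: False
        define t where "t = dist x xinf"
        have t0: "0 < t" unfolding t_def using xne by simp
        have "x \<notin> ball xinf (s N)" using xA xne unfolding A_def by blast
        then have tN: "s N \<le> t" unfolding t_def mem_ball by (simp add: dist_commute)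
        have eq: "\<Phi> y x - \<Phi> y0 x = \<delta> y * C (\<delta> y) t * E y t - \<delta> y0 * C (\<delta> y0) t * E y0 t"
          using xne unfolding t_def by (simp add: \<Phi>_def)
        have b1: "\<bar>C (\<delta> y) t\<bar> \<le> 1" "\<bar>C (\<delta> y0) t\<bar> \<le> 1" using C_range by (auto simp: abs_le_iff)
        have b2: "\<bar>E y t\<bar> \<le> 1" using E_bound[OF t0, of y] by (simp add: abs_le_iff)
        have b3: "\<bar>\<delta> y0\<bar> \<le> 1" using \<delta>_range[rule_format, of y0] by (intro abs_leI) linarith+
        have c: "\<bar>C (\<delta> y) t - C (\<delta> y0) t\<bar> \<le> 2 * \<bar>J (\<delta> y) - J (\<delta> y0)\<bar>"
        proof -
          have "\<bar>C (\<delta> y) t - C (\<delta> y0) t\<bar> \<le> \<bar>(I t - 2 * J (\<delta> y) - 2) - (I t - 2 * J (\<delta> y0) - 2)\<bar>"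
            unfolding C_def by (rule clamp_lip)
          also have "\<dots> = 2 * \<bar>J (\<delta> y) - J (\<delta> y0)\<bar>" by (simp add: abs_if)
          finally show ?thesis .
        qed
        define S where "S = (\<Sum>n\<le>N. \<bar>w y n - w y0 n\<bar>)"
        have e: "\<bar>E y t - E y0 t\<bar> \<le> S"
        proof -
          have m: "\<bar>w y m - w y0 m\<bar> \<le> S" if "m \<le> N" for m
            unfolding S_def using that by (intro member_le_sum) auto
          have "- S \<le> plin s (\<lambda>n. w y n - w y0 n) t \<and> plin s (\<lambda>n. w y n - w y0 n) t \<le> S"
          proof (rule plin_bound_high[OF _ tN], intro allI impI)
            fix m assume "m \<le> N"
            then have "\<bar>w y m - w y0 m\<bar> \<le> S" by (rule m)
            then have "w y m - w y0 m \<le> S \<and> - (w y m - w y0 m) \<le> S" by (simp only: abs_le_iff)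
            then show "- S \<le> w y m - w y0 m \<and> w y m - w y0 m \<le> S" by (intro conjI) linarith+
          qed
          then show ?thesis unfolding E_def plin_diff[symmetric] by (intro abs_leI) linarith+
        qed
        have "\<bar>\<Phi> y x - \<Phi> y0 x\<bar> \<le> \<bar>\<delta> y - \<delta> y0\<bar> + \<bar>C (\<delta> y) t - C (\<delta> y0) t\<bar> + \<bar>E y t - E y0 t\<bar>"
          unfolding eq by (rule prod3_bound[OF b1(1) b2 b3 b1(2)])
        also have "\<dots> \<le> Dd y y0 N" unfolding Dd_def S_def[symmetric] using c e by linarith
        finally show ?thesis .
      qed
      then have "\<bar>\<Phi> y x - \<Phi> y0 x\<bar> powr p \<le> Dd y y0 N powr p" using pp by (intro powr_mono2) auto
      moreover have "Dd y y0 N powr p * indicator B x = Dd y y0 N powr p" using xB by simp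
      ultimately show ?thesis using nn(2) by linarith
    qed
  qed
qed


lemma A_sets: "A N \<in> sets M"
proof -
  have "open (A N)" unfolding A_def by (intro open_Diff open_ball closed_singleton)
  then have "A N \<in> sets borel" by (rule borel_open)
  then show ?thesis using Borel by blast
qed

lemma A_sub_B: "A N \<subseteq> B"
proof
  fix x assume "x \<in> A N"
  then have "dist xinf x < s N" unfolding A_def by simp
  moreover have "s N \<le> s 0" by (rule s_le) simp
  ultimately have "dist xinf x < s 0" by linarith
  then show "x \<in> B" unfolding B_def by simp
qed

lemma A_fin: "emeasure M (A N) < \<infinity>"
proof -
  have "emeasure M (A N) \<le> emeasure M B" using A_sub_B B_sets by (rule emeasure_mono)
  then show ?thesis using B_fin by (rule le_less_trans)
qed

lemma A_lim: "(\<lambda>N. emeasure M (A N)) \<longlonglongrightarrow> 0"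
proof -
  have r: "range A \<subseteq> sets M" using A_sets by blast
  have d: "decseq A"
  proof (rule decseq_SucI)
    fix n show "A (Suc n) \<subseteq> A n"
    proof
      fix x assume "x \<in> A (Suc n)"
      then have "dist xinf x < s (Suc n)" "x \<noteq> xinf" unfolding A_def by auto
      moreover have "s (Suc n) < s n" by (rule s_dec)
      ultimately show "x \<in> A n" unfolding A_def by simp
    qed
  qed
  have f: "emeasure M (A i) \<noteq> \<infinity>" for i using A_fin[of i] by simp
  have e: "(\<Inter>i. A i) = {}"
  proof (rule ccontr)
    assume "(\<Inter>i. A i) \<noteq> {}"
    then obtain x where x: "\<And>i. x \<in> A i" by blast
    then have xne: "x \<noteq> xinf" unfolding A_def by blast
    then have "0 < dist x xinf" by simp
    then obtain N where N: "s N < dist x xinf" using ex_below by blast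
    have "dist xinf x < s N" using x[of N] unfolding A_def by simp
    then show False using N by (simp add: dist_commute)
  qed
  show ?thesis using Lim_emeasure_decseq[OF r d f] unfolding e by simp
qed

lemma A_small:
  assumes c: "0 < c"
  shows "\<exists>N. measure M (A N) < c"
proof -
  have "0 < ennreal c" using c by simp
  then have "eventually (\<lambda>N. emeasure M (A N) < ennreal c) sequentially"
    using order_tendstoD(2)[OF A_lim] by blast
  then obtain N where N: "emeasure M (A N) < ennreal c" by (auto simp: eventually_sequentially)
  have "emeasure M (A N) = ennreal (measure M (A N))"
    using A_fin[of N] by (intro emeasure_eq_ennreal_measure) simp
  then have "ennreal (measure M (A N)) < ennreal c" using N by simp
  then have "measure M (A N) < c" by (subst (asm) ennreal_less_iff) simp_all
  then show ?thesis by blast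
qed

lemma Dd_tendsto: "((\<lambda>y. Dd y y0 N) \<longlongrightarrow> 0) (at y0)"
proof -
  have dt: "((\<lambda>y. \<delta> y) \<longlongrightarrow> \<delta> y0) (at y0)"
    using \<delta>_cont unfolding continuous_on_def by simp
  have gt: "((\<lambda>y. g y i) \<longlongrightarrow> g y0 i) (at y0)" for i
  proof -
    have "continuous_on UNIV (\<lambda>y. g y i)"
      using g_cont by (rule continuous_on_product_then_coordinatewise)
    then show ?thesis unfolding continuous_on_def by simp
  qed
  have wt: "((\<lambda>y. w y n) \<longlongrightarrow> w y0 n) (at y0)" for n
  proof (cases "even n")
    case True then show ?thesis by (simp add: w_def)
  next
    case False
    then show ?thesis unfolding w_def enc_def using False by (simp only: if_False) (intro tendsto_intros gt, simp)
  qed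
  have Jt: "((\<lambda>y. J (\<delta> y)) \<longlongrightarrow> J (\<delta> y0)) (at y0)"
    unfolding J_def using \<delta>_pos[of y0] by (intro tendsto_intros dt) auto
  have "((\<lambda>y. Dd y y0 N) \<longlongrightarrow> Dd y0 y0 N) (at y0)"
    unfolding Dd_def by (intro tendsto_intros dt Jt wt)
  moreover have "Dd y0 y0 N = 0" unfolding Dd_def by simp
  ultimately show ?thesis by simp
qed

lemma A_int: "integrable M (\<lambda>x. c * indicator (A N) x :: real)"
  using integrable_real_indicator[OF A_sets A_fin] by (rule integrable_mult_right)

lemma F_tendsto: "((\<lambda>y. \<integral>x. \<bar>\<Phi> y x - \<Phi> y0 x\<bar> powr p \<partial>M) \<longlongrightarrow> 0) (at y0)"
proof (rule order_tendstoI)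
  fix a :: real assume a: "a < 0"
  have "0 \<le> (\<integral>x. \<bar>\<Phi> y x - \<Phi> y0 x\<bar> powr p \<partial>M)" for y by (rule Bochner_Integration.integral_nonneg) simp
  then show "eventually (\<lambda>y. a < (\<integral>x. \<bar>\<Phi> y x - \<Phi> y0 x\<bar> powr p \<partial>M)) (at y0)"
    using a by (intro always_eventually allI) (rule less_le_trans)
next
  fix \<epsilon> :: real assume \<epsilon>: "0 < \<epsilon>"
  have p0: "0 < p" using p by simp
  have tp: "0 < 2 powr p" by simp
  define c where "c = \<epsilon> / (4 * 2 powr p)"
  have c0: "0 < c" unfolding c_def using \<epsilon> tp by simp
  have c2: "2 powr p * c = \<epsilon> / 4" unfolding c_def using tp by simp
  obtain N where N: "measure M (A N) < c" using A_small[OF c0] by blast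
  define \<eta> where "\<eta> = (\<epsilon>/2) powr (1/p)"
  have \<eta>0: "0 < \<eta>" unfolding \<eta>_def using \<epsilon> by simp
  have \<eta>p: "\<eta> powr p = \<epsilon>/2" unfolding \<eta>_def using p0 \<epsilon> by (simp add: powr_powr)
  have "eventually (\<lambda>y. Dd y y0 N < \<eta>) (at y0)" using order_tendstoD(2)[OF Dd_tendsto \<eta>0] .
  then show "eventually (\<lambda>y. (\<integral>x. \<bar>\<Phi> y x - \<Phi> y0 x\<bar> powr p \<partial>M) < \<epsilon>) (at y0)"
  proof (rule eventually_mono)
    fix y assume D: "Dd y y0 N < \<eta>"
    have Dp: "Dd y y0 N powr p < \<epsilon>/2"
      using powr_less_mono2[OF p0 Dd_nonneg D] \<eta>p by simp
    have i1: "integrable M (\<lambda>x. Dd y y0 N powr p * indicator B x :: real)" by (rule bound_int)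
    have i2: "integrable M (\<lambda>x. 2 powr p * indicator (A N) x :: real)" by (rule A_int)
    have int: "integrable M (\<lambda>x. Dd y y0 N powr p * indicator B x + 2 powr p * indicator (A N) x :: real)"
      using i1 i2 by (rule Bochner_Integration.integrable_add)
    have "(\<integral>x. \<bar>\<Phi> y x - \<Phi> y0 x\<bar> powr p \<partial>M)
        \<le> (\<integral>x. Dd y y0 N powr p * indicator B x + 2 powr p * indicator (A N) x \<partial>M)"
    proof (rule integral_mono'[OF int])
      fix x show "\<bar>\<Phi> y x - \<Phi> y0 x\<bar> powr p \<le> Dd y y0 N powr p * indicator B x + 2 powr p * indicator (A N) x"
        by (rule pw_bound)
      show "0 \<le> Dd y y0 N powr p * indicator B x + 2 powr p * indicator (A N) x"
        by (intro add_nonneg_nonneg mult_nonneg_nonneg) auto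
    qed
    also have "\<dots> = Dd y y0 N powr p * measure M B + 2 powr p * measure M (A N)"
      using Bochner_Integration.integral_add[OF i1 i2] by (simp add: space)
    also have "\<dots> \<le> Dd y y0 N powr p + 2 powr p * c"
    proof (rule add_mono)
      show "Dd y y0 N powr p * measure M B \<le> Dd y y0 N powr p"
        using B_measure by (intro mult_left_le) auto
      show "2 powr p * measure M (A N) \<le> 2 powr p * c"
        using N by (intro mult_left_mono) auto
    qed
    also have "\<dots> < \<epsilon>" using Dp c2 \<epsilon> by linarith
    finally show "(\<integral>x. \<bar>\<Phi> y x - \<Phi> y0 x\<bar> powr p \<partial>M) < \<epsilon>" .
  qed
qed

lemma Lp_cont: "((\<lambda>y. Lp_norm M p (\<lambda>x. \<Phi> y x - \<Phi> y0 x)) \<longlongrightarrow> 0) (at y0)"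
  unfolding Lp_norm_def
proof (rule tendsto_zero_powrI[OF F_tendsto tendsto_const])
  show "\<forall>\<^sub>F y in at y0. 0 \<le> (\<integral>x. \<bar>\<Phi> y x - \<Phi> y0 x\<bar> powr p \<partial>M)"
    by (intro always_eventually allI Bochner_Integration.integral_nonneg) simp
  show "0 < 1 / p" using p by simp
qed

end


theorem mainTheorem7:
  fixes M :: "('a::metric_space) measure"
    and p :: real
    and g :: "'b::topological_space \<Rightarrow> (nat \<Rightarrow> real)"
    and xs :: "nat \<Rightarrow> 'a" and xinf :: 'a
    and \<delta> :: "'b \<Rightarrow> real"
  assumes space: "space M = UNIV"
    and Borel: "sets borel \<subseteq> sets M"
    and p: "1 \<le> p"
    and g_Sigma: "\<forall>y n. g y n \<in> {-1<..<1}"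
    and g_inj: "inj g"
    and g_cont: "continuous_on UNIV g"
    and null_dense: "\<forall>E\<in>sets M. emeasure M E = 0 \<longrightarrow> closure (UNIV - E) = UNIV"
    and x1: "dist (xs 1) xinf < 1"
    and r_decr: "\<forall>m\<ge>1. dist (xs (Suc m)) xinf < dist (xs m) xinf"
    and r_lim: "(\<lambda>m. dist (xs m) xinf) \<longlonglongrightarrow> 0"
    and ball_meas: "emeasure M (ball xinf (dist (xs 1) xinf)) \<le> 1"
    and \<delta>_cont: "continuous_on UNIV \<delta>"
    and \<delta>_range: "\<forall>y. 0 < \<delta> y \<and> \<delta> y < 1"
  shows "\<exists>\<Phi> :: 'b \<Rightarrow> 'a \<Rightarrow> real.
           (\<forall>y. in_Lp M p (\<Phi> y))
         \<and> (\<forall>y y'. (AE x in M. \<Phi> y x = \<Phi> y' x) \<longrightarrow> y = y')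
         \<and> (\<forall>y0. ((\<lambda>y. Lp_norm M p (\<lambda>x. \<Phi> y x - \<Phi> y0 x)) \<longlongrightarrow> 0) (at y0))
         \<and> (\<forall>y. Lp_norm M p (\<Phi> y) \<le> \<delta> y
               \<and> (\<forall>k::nat. k \<ge> 1 \<longrightarrow> 2 powr (- real k) \<le> \<delta> y \<longrightarrow> \<delta> y \<le> 2 powr (- real k + 1) \<longrightarrow>
                    (\<forall>x. x \<notin> ball xinf (dist (xs (2 * k)) xinf) \<longrightarrow> \<Phi> y x = 0))
               \<and> (\<forall>k::nat. k \<ge> 1 \<longrightarrow> 2 powr (- real k) \<le> \<delta> y \<longrightarrow> \<delta> y \<le> 2 powr (- real k + 1) \<longrightarrow>
                    (\<forall>j>k. \<Phi> y (xs (2 * j + 1)) = \<delta> y) \<and> \<Phi> y xinf = \<delta> y)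
               \<and> continuous_on (UNIV - {xinf}) (\<Phi> y)
               \<and> (g y \<in> c1Sigma \<longleftrightarrow> in_C M (\<Phi> y)))
         \<and> ((\<exists>K. compact K \<and> ball xinf (dist (xs 1) xinf) \<subseteq> K) \<longrightarrow>
              (\<forall>y. compact (closure {x. \<Phi> y x \<noteq> 0})
                   \<and> (g y \<in> c1Sigma \<longleftrightarrow> in_Cu M (\<Phi> y))))"
proof -
  have "constr M p g xs xinf \<delta>"
    unfolding constr_def by (intro conjI) fact+
  then interpret constr M p g xs xinf \<delta> .
  show ?thesis
    apply (rule exI[of _ \<Phi>])
    apply (intro conjI allI impI)
    subgoal by (rule \<Phi>_Lp)
    subgoal by (rule \<Phi>_inj)
    subgoal by (rule Lp_cont)
    subgoal by (rule \<Phi>_norm)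
    subgoal by (rule prop2) assumption+
    subgoal by (rule prop3) assumption+
    subgoal by (rule \<Phi>_xinf)
    subgoal by (rule \<Phi>_cont)
    subgoal by (rule c1_iff_C)
    subgoal by (rule conjunct1[OF compact_part]) assumption
    subgoal by (rule conjunct2[OF compact_part]) assumption
    done
qed

end
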